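(* Let $X,X_1,X_2,\dots,X_n$ be i.i.d. random variables. Fix $q$ with $0<q<1$ and let $q^*=2-q$. Let $A(a)=\mathbb{E}\exp_q(aX)$ and assume $A(a)$ is finite for all $a>0$. If $a>0$ and $x>\frac1a\ln_q(A(a))$, then $$\mathrm{Prob}\left(\frac1n\sum_{k=1}^nX_k\ge x\right)\le\eta_n(y),\qquad y=aA(a)^{1-q^*}x-\ln_{q^*}A(a).$$
   Context: For $q\in(0,2)$, $q\ne1$: $\ln_q(u)=\frac{1}{1-q}(u^{1-q}-1)$ for $u>0$, and $\exp_q(u)=[1+(1-q)u]_+^{1/(1-q)}$ for real $u$ (value in $[0,+\infty]$), where $[u]_+=\max(u,0)$. The function $\eta_n$ is defined as follows: let $\eta(x)=\exp_{q^*}(-x)$ for $x\ge0$ and $\eta(x)=1$ for $x\le0$; let $Z_1,\dots,Z_n$ be i.i.d. random variables with density $[\exp_{q^*}(-z)]^{q^*}$ for $z>0$ and $0$ for $z<0$ (so $\mathrm{Prob}(Z_k\ge z)=\eta(z)$); then $\eta_n(y)=\mathrm{Prob}\left(\frac1n\sum_{k=1}^nZ_k\ge y\right)$. *)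

theory Defs
  imports "HOL-Probability.Probability"
begin

definition lnq :: "real \<Rightarrow> real \<Rightarrow> real" where
  "lnq q u = (u powr (1 - q) - 1) / (1 - q)"

text \<open>This agrees with the
  paper's definition whenever the value is finite, i.e. always for q < 1, and for
  q > 1 whenever 1+(1-q)u > 0 (the only case used below).\<close>
definition expq :: "real \<Rightarrow> real \<Rightarrow> real" where
  "expq q u = (max (1 + (1 - q) * u) 0) powr (1 / (1 - q))"

definition Zdist :: "real \<Rightarrow> real measure" where
  "Zdist qs = density lborel
     (\<lambda>z. ennreal (if z > 0 then (expq qs (- z)) powr qs else 0))"

text \<open>eta_n(y) = Prob((1/n) sum_{k=1}^n Z_k \<ge> y), Z_1..Z_n i.i.d. with law Zdist
  (realised on the product space; the indices are 0..n-1).\<close>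
definition eta_n :: "real \<Rightarrow> nat \<Rightarrow> real \<Rightarrow> real" where
  "eta_n qs n y = measure (PiM {..<n} (\<lambda>_. Zdist qs))
      {z \<in> space (PiM {..<n} (\<lambda>_. Zdist qs)). (\<Sum>k<n. z k) / real n \<ge> y}"

end

theory Submission
  imports Defs "HOL-Real_Asymp.Real_Asymp"
begin


lemma dom_sum:
  fixes D E :: "'i \<Rightarrow> real measure"
  assumes "finite I"
    and PD: "\<And>i. prob_space (D i)" and PE: "\<And>i. prob_space (E i)"
    and SD[measurable_cong]: "\<And>i. sets (D i) = sets borel"
    and SE[measurable_cong]: "\<And>i. sets (E i) = sets borel"
    and le: "\<And>i t. i \<in> I \<Longrightarrow> emeasure (D i) {t..} \<le> emeasure (E i) {t..}"
  shows "(\<integral>\<^sup>+z. indicator {s..} (\<Sum>i\<in>I. z i) \<partial>PiM I D)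
       \<le> (\<integral>\<^sup>+z. indicator {s..} (\<Sum>i\<in>I. z i) \<partial>PiM I E)"
  using assms(1) le
proof (induction I arbitrary: s rule: finite_induct)
  case empty
  then show ?case by (simp add: PiM_empty)
next
  case (insert i I)
  interpret pD: product_prob_space D by (simp add: product_prob_space_def product_prob_space_axioms_def PD product_sigma_finite_def prob_space_imp_sigma_finite)
  interpret pE: product_prob_space E by (simp add: product_prob_space_def product_prob_space_axioms_def PE product_sigma_finite_def prob_space_imp_sigma_finite)
  interpret pr: pair_sigma_finite "D i" "PiM I E"
    by (simp add: pair_sigma_finite_def PD PE prob_space_PiM prob_space_imp_sigma_finite) 
  interpret pr2: pair_sigma_finite "E i" "PiM I E"
    by (simp add: pair_sigma_finite_def PE prob_space_PiM prob_space_imp_sigma_finite) 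
  have sumeq: "(\<Sum>j\<in>insert i I. (x(i:=y)) j) = y + (\<Sum>j\<in>I. x j)" for x :: "'i \<Rightarrow> real" and y
    using insert by (simp add: sum.insert) (intro sum.cong, auto)
  have ind: "indicator {s..} (y + S) = (indicator {s - y..} S :: ennreal)" for y S :: real
    by (auto simp: indicator_def)
  have ind2: "indicator {s..} (y + S) = (indicator {s - S..} y :: ennreal)" for y S :: real
    by (auto simp: indicator_def)
  have "(\<integral>\<^sup>+z. indicator {s..} (\<Sum>j\<in>insert i I. z j) \<partial>PiM (insert i I) D)
      = (\<integral>\<^sup>+y. (\<integral>\<^sup>+x. indicator {s..} (\<Sum>j\<in>insert i I. (x(i:=y)) j) \<partial>PiM I D) \<partial>D i)"
    using insert by (intro pD.product_nn_integral_insert_rev) auto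
  also have "\<dots> = (\<integral>\<^sup>+y. (\<integral>\<^sup>+x. indicator {s - y..} (\<Sum>j\<in>I. x j) \<partial>PiM I D) \<partial>D i)"
    by (simp only: sumeq ind)
  also have "\<dots> \<le> (\<integral>\<^sup>+y. (\<integral>\<^sup>+x. indicator {s - y..} (\<Sum>j\<in>I. x j) \<partial>PiM I E) \<partial>D i)"
    using insert by (intro nn_integral_mono) auto
  also have "\<dots> = (\<integral>\<^sup>+y. (\<integral>\<^sup>+x. indicator {s..} (y + (\<Sum>j\<in>I. x j)) \<partial>PiM I E) \<partial>D i)"
    by (simp add: ind)
  also have "\<dots> = (\<integral>\<^sup>+x. (\<integral>\<^sup>+y. indicator {s..} (y + (\<Sum>j\<in>I. x j)) \<partial>D i) \<partial>PiM I E)"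
    by (rule pr.Fubini'[symmetric]) measurable
  also have "\<dots> = (\<integral>\<^sup>+x. emeasure (D i) {s - (\<Sum>j\<in>I. x j)..} \<partial>PiM I E)"
    by (simp add: ind2 SD)
  also have "\<dots> \<le> (\<integral>\<^sup>+x. emeasure (E i) {s - (\<Sum>j\<in>I. x j)..} \<partial>PiM I E)"
    using insert by (intro nn_integral_mono) auto
  also have "\<dots> = (\<integral>\<^sup>+x. (\<integral>\<^sup>+y. indicator {s..} (y + (\<Sum>j\<in>I. x j)) \<partial>E i) \<partial>PiM I E)"
    by (simp add: ind2 SE)
  also have "\<dots> = (\<integral>\<^sup>+y. (\<integral>\<^sup>+x. indicator {s..} (y + (\<Sum>j\<in>I. x j)) \<partial>PiM I E) \<partial>E i)"
    by (rule pr2.Fubini') measurable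
  also have "\<dots> = (\<integral>\<^sup>+y. (\<integral>\<^sup>+x. indicator {s..} (\<Sum>j\<in>insert i I. (x(i:=y)) j) \<partial>PiM I E) \<partial>E i)"
    by (simp only: sumeq)
  also have "\<dots> = (\<integral>\<^sup>+z. indicator {s..} (\<Sum>j\<in>insert i I. z j) \<partial>PiM (insert i I) E)"
    using insert by (intro pE.product_nn_integral_insert_rev[symmetric]) auto
  finally show ?case .
qed



lemma expq_neg:
  assumes "0 < q" "q < 1" "z \<ge> 0"
  shows "expq (2 - q) (- z) = (1 + (1 - q) * z) powr (- (1 / (1 - q)))"
proof -
  have "1 + (1 - (2 - q)) * - z = 1 + (1 - q) * z" by (simp add: algebra_simps)
  moreover have "1 + (1 - q) * z \<ge> 0" using assms by (simp add: mult_nonneg_nonneg)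
  moreover have "1 / (1 - (2 - q)) = - (1 / (1 - q))"
    using assms by (simp add: divide_simps)
  ultimately show ?thesis unfolding expq_def by (simp add: max_def)
qed

lemma Zdens:
  assumes "0 < q" "q < 1" "z \<ge> 0"
  shows "(expq (2 - q) (- z)) powr (2 - q) = (1 + (1 - q) * z) powr (- (1 / (1 - q)) - 1)"
proof -
  have pos: "1 + (1 - q) * z > 0" using assms by (smt (verit) mult_nonneg_nonneg)
  have "- (1 / (1 - q)) * (2 - q) = - (1 / (1 - q)) - 1" using assms by (simp add: field_simps)
  then show ?thesis using pos by (simp add: expq_neg[OF assms] powr_powr)
qed

lemma Zdist_FTC:
  assumes q: "0 < q" "q < 1" and t: "t \<ge> 0"
  shows "(\<integral>\<^sup>+z. ennreal ((1 + (1 - q) * z) powr (- (1 / (1 - q)) - 1)) * indicator {t..} z \<partial>lborel)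
     = ennreal ((1 + (1 - q) * t) powr (- (1 / (1 - q))))"
proof -
  let ?p = "1 / (1 - q)"
  have p: "?p > 0" using q by simp
  have "(\<integral>\<^sup>+z. ennreal ((1 + (1 - q) * z) powr (- ?p - 1)) * indicator {t..} z \<partial>lborel)
     = ennreal (0 - (- ((1 + (1 - q) * t) powr (- ?p))))"
  proof (rule nn_integral_FTC_atLeast)
    show "(\<lambda>z. (1 + (1 - q) * z) powr (- ?p - 1)) \<in> borel_measurable borel" by measurable
    fix x assume x: "t \<le> x"
    have pos: "1 + (1 - q) * x > 0" using q t x by (smt (verit) mult_nonneg_nonneg)
    show "0 \<le> (1 + (1 - q) * x) powr (- ?p - 1)" by simp
    have "DERIV (\<lambda>z. (1 + (1 - q) * z) powr (- ?p)) x :> (- ?p) * (1 + (1 - q) * x) powr (- ?p - of_nat 1) * (1 - q)"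
      by (rule DERIV_fun_powr[where g="\<lambda>z. 1 + (1 - q) * z", OF _ pos]) (auto intro!: derivative_eq_intros)
    moreover have "(- ?p) * (1 + (1 - q) * x) powr (- ?p - of_nat 1) * (1 - q) = - ((1 + (1 - q) * x) powr (- ?p - 1))"
      using q by simp
    ultimately show "DERIV (\<lambda>z. - ((1 + (1 - q) * z) powr (- ?p))) x :> (1 + (1 - q) * x) powr (- ?p - 1)"
      using DERIV_minus by fastforce
  next
    have "LIM z at_top. 1 + (1 - q) * z :> at_top"
      using q by real_asymp
    then have "((\<lambda>z. (1 + (1 - q) * z) powr (- ?p)) \<longlongrightarrow> 0) at_top"
      by (rule tendsto_neg_powr[rotated]) (use p in simp)
    then show "((\<lambda>z. - ((1 + (1 - q) * z) powr (- ?p))) \<longlongrightarrow> 0) at_top"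
      using tendsto_minus by fastforce
  qed
  then show ?thesis by simp
qed

lemma expq_meas[measurable]: "(\<lambda>u. expq qs u) \<in> borel_measurable borel"
  unfolding expq_def by measurable

lemma sets_Zdist[simp, measurable_cong]: "sets (Zdist qs) = sets borel"
  by (simp add: Zdist_def)

lemma Zdist_tail_gen:
  assumes q: "0 < q" "q < 1" and t: "t \<le> 0" and A: "{t..} \<subseteq> A" "A \<in> sets borel"
  shows "emeasure (Zdist (2 - q)) A = 1"
proof -
  let ?g = "\<lambda>z. (1 + (1 - q) * z) powr (- (1 / (1 - q)) - 1)"
  have "emeasure (Zdist (2 - q)) A = (\<integral>\<^sup>+z. ennreal (if z > 0 then (expq (2 - q) (- z)) powr (2 - q) else 0) * indicator A z \<partial>lborel)"
    unfolding Zdist_def using A by (subst emeasure_density) auto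
  also have "\<dots> = (\<integral>\<^sup>+z. ennreal (?g z) * indicator {0..} z \<partial>lborel)"
  proof (intro nn_integral_cong_AE eventually_mono[OF AE_lborel_singleton[of 0]])
    fix z :: real assume "z \<noteq> 0"
    then show "ennreal (if z > 0 then (expq (2 - q) (- z)) powr (2 - q) else 0) * indicator A z = ennreal (?g z) * indicator {0..} z"
      using Zdens[OF q, of z] A t by (auto simp: indicator_def subset_eq)
  qed
  also have "\<dots> = 1" using Zdist_FTC[OF q, of 0] by simp
  finally show ?thesis .
qed

lemma prob_space_Zdist: assumes q: "0 < q" "q < 1" shows "prob_space (Zdist (2 - q))"
proof (rule prob_spaceI)
  have "emeasure (Zdist (2 - q)) UNIV = 1" by (rule Zdist_tail_gen[OF q, of 0]) auto
  moreover have "space (Zdist (2 - q)) = UNIV" by (simp add: Zdist_def)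
  ultimately show "emeasure (Zdist (2 - q)) (space (Zdist (2 - q))) = 1" by simp
qed

lemma Zdist_tail_pos:
  assumes q: "0 < q" "q < 1" and t: "t > 0"
  shows "emeasure (Zdist (2 - q)) {t..} = ennreal ((1 + (1 - q) * t) powr (- (1 / (1 - q))))"
proof -
  let ?g = "\<lambda>z. (1 + (1 - q) * z) powr (- (1 / (1 - q)) - 1)"
  have "emeasure (Zdist (2 - q)) {t..} = (\<integral>\<^sup>+z. ennreal (if z > 0 then (expq (2 - q) (- z)) powr (2 - q) else 0) * indicator {t..} z \<partial>lborel)"
    unfolding Zdist_def by (subst emeasure_density) auto
  also have "\<dots> = (\<integral>\<^sup>+z. ennreal (?g z) * indicator {t..} z \<partial>lborel)"
  proof (intro nn_integral_cong)
    fix z :: real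
    show "ennreal (if z > 0 then (expq (2 - q) (- z)) powr (2 - q) else 0) * indicator {t..} z = ennreal (?g z) * indicator {t..} z"
      using Zdens[OF q, of z] t by (auto simp: indicator_def)
  qed
  also have "\<dots> = ennreal ((1 + (1 - q) * t) powr (- (1 / (1 - q))))" using Zdist_FTC[OF q, of t] t by simp
  finally show ?thesis .
qed



lemma (in prob_space) indep_sets_reindex:
  assumes f: "inj_on f I" and ind: "indep_sets F (f ` I)"
  shows "indep_sets (\<lambda>i. F (f i)) I"
  unfolding indep_sets_def
proof (intro conjI ballI allI impI)
  fix i assume "i \<in> I" then show "F (f i) \<subseteq> events" using ind by (auto simp: indep_sets_def)
next
  fix J A assume J: "J \<subseteq> I" "J \<noteq> {}" "finite J" and A: "A \<in> Pi J (\<lambda>i. F (f i))"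
  have fJ: "inj_on f J" using f J(1) inj_on_subset by blast
  define B where "B j = A (the_inv_into J f j)" for j
  have BA: "B (f i) = A i" if "i \<in> J" for i using fJ that by (simp add: B_def the_inv_into_f_f)
  have "B \<in> Pi (f ` J) F" using A BA by auto
  then have "prob (\<Inter>j\<in>f ` J. B j) = (\<Prod>j\<in>f ` J. prob (B j))"
    using ind J unfolding indep_sets_def by (metis image_is_empty image_mono finite_imageI)
  moreover have "(\<Inter>j\<in>f ` J. B j) = (\<Inter>i\<in>J. A i)" using BA by auto
  moreover have "(\<Prod>j\<in>f ` J. prob (B j)) = (\<Prod>i\<in>J. prob (A i))"
    using fJ BA by (simp add: prod.reindex)
  ultimately show "prob (\<Inter>j\<in>J. A j) = (\<Prod>j\<in>J. prob (A j))" by simp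
qed

lemma (in prob_space) indep_vars_reindex_Suc:
  assumes "indep_vars M' X (Suc ` I)"
  shows "indep_vars (\<lambda>i. M' (Suc i)) (\<lambda>i. X (Suc i)) I"
  using assms indep_sets_reindex[of Suc I "\<lambda>i. sigma_sets (space M) {X i -` A \<inter> space M |A. A \<in> sets (M' i)}"]
  unfolding indep_vars_def by auto



lemma expq_nonneg: "expq q u \<ge> 0" by (simp add: expq_def)

lemma single_dom:
  assumes M: "prob_space M" and X[measurable]: "X \<in> borel_measurable M" and q: "0 < q" "q < 1" and a: "a > 0"
    and int: "integrable M (\<lambda>\<omega>. expq q (a * X \<omega>))"
    and A_def: "A = integral\<^sup>L M (\<lambda>\<omega>. expq q (a * X \<omega>))"
    and c_def: "c = a * A powr (1 - (2 - q))" and d_def: "d = lnq (2 - q) A"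
  shows "emeasure M {\<omega>\<in>space M. t \<le> c * X \<omega> - d} \<le> emeasure (Zdist (2 - q)) {t..}"
proof -
  interpret prob_space M by fact
  have A0: "A \<ge> 0" unfolding A_def by (rule integral_nonneg_AE) (simp add: expq_nonneg)
  show ?thesis
  proof (cases "t \<le> 0")
    case True
    then show ?thesis using Zdist_tail_gen[OF q True] emeasure_le_1 by simp
  next
    case False
    then have t: "t > 0" by simp
    let ?B = "1 + (1 - q) * t"
    have Bpos: "?B > 0" using q t by (smt (verit) mult_pos_pos)
    show ?thesis
    proof (cases "A = 0")
      case True
      then have "c = 0" "d = 1 / (1 - q)" using q unfolding c_def d_def lnq_def by (auto simp: divide_simps)
      then have "c = 0" "d > 0" using q by auto
      then have "{\<omega>\<in>space M. t \<le> c * X \<omega> - d} = {}" using t by auto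
      then show ?thesis by (metis emeasure_empty zero_le)
    next
      case False
      then have Apos: "A > 0" using A0 by simp
      let ?K = "A powr (q - 1)"
      have Kpos: "?K > 0" using Apos by simp
      have cK: "c = a * ?K" unfolding c_def by simp
      have dK: "(1 - q) * d = 1 - ?K" unfolding d_def lnq_def using q by (simp add: field_simps)
      let ?m = "A * ?B powr (1 / (1 - q))"
      have mpos: "?m > 0" using Apos Bpos by simp
      have sub: "{\<omega>\<in>space M. t \<le> c * X \<omega> - d} \<subseteq> {\<omega>\<in>space M. ?m \<le> expq q (a * X \<omega>)}"
      proof safe
        fix \<omega> assume "t \<le> c * X \<omega> - d"
        then have "?B \<le> 1 + (1 - q) * (c * X \<omega> - d)" using q by (simp add: mult_left_mono)
        also have "\<dots> = ?K * (1 + (1 - q) * (a * X \<omega>))" using cK dK by (simp add: algebra_simps)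
        finally have h: "?B \<le> ?K * (1 + (1 - q) * (a * X \<omega>))" .
        have "A powr (1 - q) * ?K = 1" using Apos by (simp add: powr_add[symmetric])
        then have h2: "A powr (1 - q) * ?B \<le> 1 + (1 - q) * (a * X \<omega>)"
          using h mult_left_mono[OF h, of "A powr (1 - q)"] by (simp add: mult.assoc[symmetric])
        have "?m = (A powr (1 - q) * ?B) powr (1 / (1 - q))"
          using Apos Bpos q by (simp add: powr_mult powr_powr)
        also have "\<dots> \<le> (1 + (1 - q) * (a * X \<omega>)) powr (1 / (1 - q))"
          using h2 Apos Bpos q by (intro powr_mono2) auto
        also have "\<dots> = expq q (a * X \<omega>)"
          unfolding expq_def using h2 Apos Bpos by (simp add: max_def) (smt (verit) mult_pos_pos powr_gt_zero)
        finally show "?m \<le> expq q (a * X \<omega>)" .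
      qed
      have "emeasure M {\<omega>\<in>space M. t \<le> c * X \<omega> - d} \<le> emeasure M {\<omega>\<in>space M. ?m \<le> expq q (a * X \<omega>)}"
        by (rule emeasure_mono[OF sub]) measurable
      also have "\<dots> = ennreal (measure M {\<omega>\<in>space M. ?m \<le> expq q (a * X \<omega>)})"
        by (simp add: emeasure_eq_measure)
      also have "\<dots> \<le> ennreal (A / ?m)"
        unfolding A_def using mpos[unfolded A_def] int
        by (intro ennreal_leI integral_Markov_inequality_measure[where A="space M"]) (auto simp: expq_nonneg)
      also have "A / ?m = ?B powr (- (1 / (1 - q)))"
        using Apos Bpos by (simp add: powr_minus_divide)
      also have "ennreal \<dots> = emeasure (Zdist (2 - q)) {t..}"
        using Zdist_tail_pos[OF q t] by simp
      finally show ?thesis .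
    qed
  qed
qed



lemma sum_sets:
  fixes D :: "'i \<Rightarrow> real measure"
  assumes SD: "\<And>i. sets (D i) = sets borel"
  shows "{z\<in>space (PiM I D). s \<le> (\<Sum>i\<in>I. z i)} \<in> sets (PiM I D)"
proof -
  have "(\<lambda>z. z i) \<in> borel_measurable (PiM I D)" if "i \<in> I" for i
    using measurable_component_singleton[OF that, of D] measurable_cong_sets[OF refl SD[of i], of "PiM I D"] by simp
  then have [measurable]: "(\<lambda>z. \<Sum>i\<in>I. z i) \<in> borel_measurable (PiM I D)"
    using borel_measurable_sum[of I "\<lambda>i z. z i" "PiM I D"] by simp
  show ?thesis by measurable
qed

lemma ev_nn:
  fixes D :: "'i \<Rightarrow> real measure"
  assumes [measurable_cong]: "\<And>i. sets (D i) = sets borel"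
  shows "emeasure (PiM I D) {z\<in>space (PiM I D). s \<le> (\<Sum>i\<in>I. z i)}
       = (\<integral>\<^sup>+z. indicator {s..} (\<Sum>i\<in>I. z i) \<partial>PiM I D)"
proof -
  have "(\<integral>\<^sup>+z. indicator {s..} (\<Sum>i\<in>I. z i) \<partial>PiM I D)
      = (\<integral>\<^sup>+z. indicator {z\<in>space (PiM I D). s \<le> (\<Sum>i\<in>I. z i)} z \<partial>PiM I D)"
    by (rule nn_integral_cong) (auto simp: indicator_def)
  also have "\<dots> = emeasure (PiM I D) {z\<in>space (PiM I D). s \<le> (\<Sum>i\<in>I. z i)}"
  proof (rule nn_integral_indicator)
    have [measurable]: "(\<lambda>z. \<Sum>i\<in>I. z i) \<in> borel_measurable (PiM I D)"
    proof -
      have "(\<lambda>z. z i) \<in> borel_measurable (PiM I D)" if "i \<in> I" for i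
        using measurable_component_singleton[OF that, of D] measurable_cong_sets[OF refl assms[of i], of "PiM I D"] by simp
      then show ?thesis using borel_measurable_sum[of I "\<lambda>i z. z i" "PiM I D"] by simp
    qed
    show "{z\<in>space (PiM I D). s \<le> (\<Sum>i\<in>I. z i)} \<in> sets (PiM I D)" by measurable
  qed
  finally show ?thesis by simp
qed

theorem proposition9:
  fixes M :: "'w measure" and Xs :: "nat \<Rightarrow> 'w \<Rightarrow> real"
    and q a x :: real and n :: nat
  assumes "prob_space M"
    and "n \<ge> 1"
    and "\<And>k. k \<le> n \<Longrightarrow> Xs k \<in> borel_measurable M"
    and "prob_space.indep_vars M (\<lambda>_. borel) Xs {0..n}"
    and "\<And>k. k \<le> n \<Longrightarrow> distr M borel (Xs k) = distr M borel (Xs 0)"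
    and "0 < q" and "q < 1"
    and "\<And>b. b > 0 \<Longrightarrow> integrable M (\<lambda>\<omega>. expq q (b * Xs 0 \<omega>))"
    and "a > 0"
    and "x > (1 / a) * lnq q (integral\<^sup>L M (\<lambda>\<omega>. expq q (a * Xs 0 \<omega>)))"
  shows "measure M {\<omega> \<in> space M. (\<Sum>k=1..n. Xs k \<omega>) / real n \<ge> x}
     \<le> eta_n (2 - q) n
          (a * (integral\<^sup>L M (\<lambda>\<omega>. expq q (a * Xs 0 \<omega>))) powr (1 - (2 - q)) * x
           - lnq (2 - q) (integral\<^sup>L M (\<lambda>\<omega>. expq q (a * Xs 0 \<omega>))))"
proof -
  interpret P: prob_space M by fact
  note q = assms(6,7)
  define A where "A = integral\<^sup>L M (\<lambda>\<omega>. expq q (a * Xs 0 \<omega>))"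
  define c where "c = a * A powr (1 - (2 - q))"
  define d where "d = lnq (2 - q) A"
  define y where "y = c * x - d"
  define W where "W k \<omega> = c * Xs (Suc k) \<omega> - d" for k \<omega>
  define Dp where "Dp = distr M borel (\<lambda>\<omega>. c * Xs 0 \<omega> - d)"
  define Z where "Z = Zdist (2 - q)"
  have npos: "real n > 0" using assms(2) by simp
  have c0: "c \<ge> 0" unfolding c_def using assms(9) by simp
  have phim: "(\<lambda>u. c * u - d) \<in> borel_measurable borel" by measurable
  have X0[measurable]: "Xs 0 \<in> borel_measurable M" using assms(3) by simp
  have Wm: "W k \<in> borel_measurable M" if "k < n" for k
    using measurable_comp[OF assms(3)[of "Suc k"] phim] that by (simp add: W_def[abs_def] comp_def)
  have Wdist: "distr M borel (W k) = Dp" if "k < n" for k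
  proof -
    have "distr M borel (W k) = distr (distr M borel (Xs (Suc k))) borel (\<lambda>u. c * u - d)"
      using distr_distr[OF phim assms(3)[of "Suc k"]] that by (simp add: W_def[abs_def] comp_def)
    also have "\<dots> = distr (distr M borel (Xs 0)) borel (\<lambda>u. c * u - d)"
      using assms(5)[of "Suc k"] that by simp
    also have "\<dots> = Dp"
      using distr_distr[OF phim X0] by (simp add: Dp_def comp_def)
    finally show ?thesis .
  qed
  have ind: "P.indep_vars (\<lambda>_. borel) W {..<n}"
  proof -
    have "P.indep_vars (\<lambda>_. borel) Xs (Suc ` {..<n})"
      by (rule P.indep_vars_subset[OF assms(4)]) auto
    then have "P.indep_vars (\<lambda>_. borel) (\<lambda>k. Xs (Suc k)) {..<n}"
      using P.indep_vars_reindex_Suc by fastforce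
    then show ?thesis unfolding W_def
      by (rule P.indep_vars_compose2[where Y="\<lambda>_ u. c * u - d"]) (rule phim)
  qed
  have Dprob: "prob_space Dp" unfolding Dp_def by (rule P.prob_space_distr) measurable
  have sDp[measurable_cong]: "sets Dp = sets borel" by (simp add: Dp_def)
  have Zprob: "prob_space Z" unfolding Z_def by (rule prob_space_Zdist[OF q])
  have sZ[measurable_cong]: "sets Z = sets borel" by (simp add: Z_def)
  have Ddom: "emeasure Dp {t..} \<le> emeasure Z {t..}" for t
  proof -
    have "emeasure Dp {t..} = emeasure M ((\<lambda>\<omega>. c * Xs 0 \<omega> - d) -` {t..} \<inter> space M)"
      unfolding Dp_def by (rule emeasure_distr) measurable
    also have "(\<lambda>\<omega>. c * Xs 0 \<omega> - d) -` {t..} \<inter> space M = {\<omega>\<in>space M. t \<le> c * Xs 0 \<omega> - d}" by auto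
    also have "emeasure M \<dots> \<le> emeasure Z {t..}"
      unfolding Z_def
      by (rule single_dom[OF assms(1) X0 q assms(9) assms(8)[OF assms(9)] A_def c_def d_def])
    finally show ?thesis .
  qed
  let ?PD = "PiM {..<n} (\<lambda>_. Dp)" and ?PZ = "PiM {..<n} (\<lambda>_. Z)"
  let ?SD = "{z\<in>space ?PD. real n * y \<le> (\<Sum>k<n. z k)}"
  let ?SZ = "{z\<in>space ?PZ. real n * y \<le> (\<Sum>k<n. z k)}"
  have PDprob: "prob_space ?PD" by (rule prob_space_PiM) (rule Dprob)
  have PZprob: "prob_space ?PZ" by (rule prob_space_PiM) (rule Zprob)
  have emle: "emeasure ?PD ?SD \<le> emeasure ?PZ ?SZ"
    unfolding ev_nn[OF sDp] ev_nn[OF sZ]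
    by (rule dom_sum) (use Dprob Zprob Ddom sDp sZ in auto)
  interpret PD: prob_space ?PD by (rule PDprob)
  interpret PZ: prob_space ?PZ by (rule PZprob)
  have mainle: "measure ?PD ?SD \<le> measure ?PZ ?SZ"
    using emle by (simp add: PD.emeasure_eq_measure PZ.emeasure_eq_measure)
  have sumW: "(\<Sum>k<n. W k \<omega>) = c * (\<Sum>k=1..n. Xs k \<omega>) - real n * d" for \<omega>
    by (simp add: W_def sum_subtractf sum_distrib_left sum.atLeast1_atMost_eq)
  have Wsm: "(\<lambda>\<omega>. \<Sum>k<n. W k \<omega>) \<in> borel_measurable M"
    by (rule borel_measurable_sum) (simp add: Wm)
  have fm: "(\<lambda>\<omega>. \<lambda>k\<in>{..<n}. W k \<omega>) \<in> measurable M (PiM {..<n} (\<lambda>_. borel))"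
    by (rule measurable_restrict) (simp add: Wm)
  have distr_eq: "distr M (PiM {..<n} (\<lambda>_. borel)) (\<lambda>\<omega>. \<lambda>k\<in>{..<n}. W k \<omega>) = ?PD"
  proof -
    have "distr M (PiM {..<n} (\<lambda>_. borel)) (\<lambda>\<omega>. \<lambda>k\<in>{..<n}. W k \<omega>) = PiM {..<n} (\<lambda>k. distr M borel (W k))"
    proof -
      have "0 \<in> {..<n}" using assms(2) by simp
      then have ne: "{..<n} \<noteq> {}" by blast
      show ?thesis
        using P.indep_vars_iff_distr_eq_PiM'[where I="{..<n}" and M'="\<lambda>_. borel" and X=W, OF ne] ind Wm by simp
    qed
    also have "\<dots> = ?PD" by (rule PiM_cong) (auto simp: Wdist)
    finally show ?thesis .
  qed
  have SDs: "?SD \<in> sets (PiM {..<n} (\<lambda>_. borel))"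
  proof -
    have "?SD \<in> sets ?PD" by (rule sum_sets) (rule sDp)
    moreover have "sets ?PD = sets (PiM {..<n} (\<lambda>_. borel))"
      by (rule sets_PiM_cong) (auto simp: sDp)
    ultimately show ?thesis by simp
  qed
  have "measure M {\<omega> \<in> space M. (\<Sum>k=1..n. Xs k \<omega>) / real n \<ge> x}
      \<le> measure M {\<omega>\<in>space M. real n * y \<le> (\<Sum>k<n. W k \<omega>)}"
  proof (rule P.finite_measure_mono)
    show "{\<omega>\<in>space M. real n * y \<le> (\<Sum>k<n. W k \<omega>)} \<in> sets M" using Wsm by measurable
    show "{\<omega> \<in> space M. (\<Sum>k=1..n. Xs k \<omega>) / real n \<ge> x} \<subseteq> {\<omega>\<in>space M. real n * y \<le> (\<Sum>k<n. W k \<omega>)}"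
    proof safe
      fix \<omega> assume "x \<le> (\<Sum>k=1..n. Xs k \<omega>) / real n"
      then have "x * real n \<le> (\<Sum>k=1..n. Xs k \<omega>)" using npos by (simp only: pos_le_divide_eq)
      then have "real n * x \<le> (\<Sum>k=1..n. Xs k \<omega>)" by (simp only: mult.commute)
      then have "c * (real n * x) \<le> c * (\<Sum>k=1..n. Xs k \<omega>)" using c0 by (rule mult_left_mono)
      then show "real n * y \<le> (\<Sum>k<n. W k \<omega>)" unfolding sumW y_def by (simp add: algebra_simps)
    qed
  qed
  also have "{\<omega>\<in>space M. real n * y \<le> (\<Sum>k<n. W k \<omega>)} = (\<lambda>\<omega>. \<lambda>k\<in>{..<n}. W k \<omega>) -` ?SD \<inter> space M"
  proof -
    have inS: "(\<lambda>k\<in>{..<n}. W k \<omega>) \<in> space ?PD" for \<omega>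
      by (simp add: space_PiM Dp_def)
    have sm: "(\<Sum>k<n. (\<lambda>k\<in>{..<n}. W k \<omega>) k) = (\<Sum>k<n. W k \<omega>)" for \<omega>
      by (rule sum.cong) auto
    show ?thesis by (rule set_eqI) (simp add: inS sm conj_commute)
  qed
  also have "measure M \<dots> = measure ?PD ?SD"
    by (rule measure_distr[OF fm SDs, unfolded distr_eq, symmetric])
  also have "\<dots> \<le> measure ?PZ ?SZ" by (rule mainle)
  also have "?SZ = {z \<in> space ?PZ. (\<Sum>k<n. z k) / real n \<ge> y}"
  proof (rule Collect_cong)
    fix z
    have "real n * y \<le> (\<Sum>k<n. z k) \<longleftrightarrow> y \<le> (\<Sum>k<n. z k) / real n"
      using npos by (simp only: pos_le_divide_eq mult.commute)
    then show "(z \<in> space ?PZ \<and> real n * y \<le> (\<Sum>k<n. z k)) = (z \<in> space ?PZ \<and> (\<Sum>k<n. z k) / real n \<ge> y)"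
      by blast
  qed
  also have "measure ?PZ \<dots> = eta_n (2 - q) n y" by (simp add: eta_n_def Z_def)
  finally show ?thesis by (simp add: y_def c_def d_def A_def)
qed

end
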